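(* Let $N=\{A,B,C,D,E\}$. The formal dual of the linear form $$Q=I(A;B\mid C)+I(A;B\mid D)+I(C;D)-I(A;B)+I(A;B\mid E)+I(A;E\mid B)+I(B;E\mid A)$$ is the linear form $$Q^\perp=I(C;D\mid AE)+I(C;D\mid BE)+I(A;B\mid E)-I(C;D\mid E)+I(A;B\mid CD)+I(A;E\mid CD)+I(B;E\mid CD).$$ Moreover, for $0<\varepsilon<1/4$ let $(A,B,C,D,E)$ be binary random variables with joint distribution giving probability $\varepsilon$ to each of the tuples $(0,0,0,0,0),(0,1,1,0,0),(1,0,0,1,0),(1,1,0,0,0)$ and probability $1/4-\varepsilon$ to each of $(0,0,0,0,1),(0,1,0,0,1),(1,0,0,0,1),(1,1,0,0,1)$ (listed as $(A,B,C,D,E)$). Then, evaluated on the entropic vector of this distribution, $Q^\perp<0$ for all sufficiently small $\varepsilon>0$. In particular $Q^\perp\ge 0$ is not a valid information inequality.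
   Context: For random variables, $I(X;Y\mid Z)=H(XZ)+H(YZ)-H(XYZ)-H(Z)$ is conditional mutual information ($H$ Shannon entropy, juxtaposition denotes joint variables, $I(X;Y)=I(X;Y\mid\varnothing)$); the same expression defines a linear form on vectors $h$ indexed by subsets of $N$ (with $h(\varnothing)=0$). The dual of $h$ is $h^\perp(J)=h(N\setminus J)-h(N)+\sum_{j\in J}h(\{j\})$, and the formal dual of a linear form $c$ is the linear form $h\mapsto c(h^\perp)$. (The inequality $Q\ge 0$ is a known valid non-Shannon information inequality.) *)

theory Defs
  imports Complex_Main
begin

datatype var = VA | VB | VC | VD | VE

type_synonym vec = "var set \<Rightarrow> real"
type_synonym linform = "vec \<Rightarrow> real"

definition CMI :: "var set \<Rightarrow> var set \<Rightarrow> var set \<Rightarrow> linform" where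
  "CMI X Y Z h = h (X \<union> Z) + h (Y \<union> Z) - h (X \<union> Y \<union> Z) - h Z"

definition MI :: "var set \<Rightarrow> var set \<Rightarrow> linform" where
  "MI X Y = CMI X Y {}"

definition dualvec :: "vec \<Rightarrow> vec" where
  "dualvec h J = h (UNIV - J) - h UNIV + (\<Sum>j\<in>J. h {j})"

definition formal_dual :: "linform \<Rightarrow> linform" where
  "formal_dual c = (\<lambda>h. c (dualvec h))"

definition Q :: linform where
  "Q h = CMI {VA} {VB} {VC} h + CMI {VA} {VB} {VD} h + MI {VC} {VD} h - MI {VA} {VB} h
        + CMI {VA} {VB} {VE} h + CMI {VA} {VE} {VB} h + CMI {VB} {VE} {VA} h"

definition Qperp :: linform where
  "Qperp h = CMI {VC} {VD} {VA, VE} h + CMI {VC} {VD} {VB, VE} h + CMI {VA} {VB} {VE} h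
        - CMI {VC} {VD} {VE} h + CMI {VA} {VB} {VC, VD} h + CMI {VA} {VE} {VC, VD} h
        + CMI {VB} {VE} {VC, VD} h"

text \<open>Joint outcomes are assignments var \<Rightarrow> nat; a finite distribution is given by a
  finite support set Om and a probability mass function p on it.
  Shannon entropy (natural log; the base does not affect signs) of the marginal on S.\<close>
definition proj :: "var set \<Rightarrow> (var \<Rightarrow> nat) \<Rightarrow> (var \<Rightarrow> nat)" where
  "proj S x = (\<lambda>v. if v \<in> S then x v else 0)"

definition marg :: "((var \<Rightarrow> nat) \<Rightarrow> real) \<Rightarrow> (var \<Rightarrow> nat) set \<Rightarrow> var set \<Rightarrow> (var \<Rightarrow> nat) \<Rightarrow> real" where
  "marg p Om S y = (\<Sum>x\<in>{x\<in>Om. proj S x = y}. p x)"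

definition entvec :: "((var \<Rightarrow> nat) \<Rightarrow> real) \<Rightarrow> (var \<Rightarrow> nat) set \<Rightarrow> vec" where
  "entvec p Om S = - (\<Sum>y\<in>proj S ` Om. marg p Om S y * ln (marg p Om S y))"

definition pt :: "nat \<Rightarrow> nat \<Rightarrow> nat \<Rightarrow> nat \<Rightarrow> nat \<Rightarrow> var \<Rightarrow> nat" where
  "pt a b c d e = (\<lambda>v. case v of VA \<Rightarrow> a | VB \<Rightarrow> b | VC \<Rightarrow> c | VD \<Rightarrow> d | VE \<Rightarrow> e)"

definition Om0 :: "(var \<Rightarrow> nat) set" where
  "Om0 = {pt 0 0 0 0 0, pt 0 1 1 0 0, pt 1 0 0 1 0, pt 1 1 0 0 0,
          pt 0 0 0 0 1, pt 0 1 0 0 1, pt 1 0 0 0 1, pt 1 1 0 0 1}"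

definition peps :: "real \<Rightarrow> (var \<Rightarrow> nat) \<Rightarrow> real" where
  "peps \<epsilon> x = (if x \<in> {pt 0 0 0 0 0, pt 0 1 1 0 0, pt 1 0 0 1 0, pt 1 1 0 0 0} then \<epsilon>
               else if x \<in> {pt 0 0 0 0 1, pt 0 1 0 0 1, pt 1 0 0 0 1, pt 1 1 0 0 1} then 1/4 - \<epsilon>
               else 0)"

end

theory Submission
  imports Defs
begin

definition phi :: "real \<Rightarrow> real" where "phi x = x * ln x"
definition setof :: "bool \<Rightarrow> bool \<Rightarrow> bool \<Rightarrow> bool \<Rightarrow> bool \<Rightarrow> var set" where
  "setof p1 p2 p3 p4 p5 = {v. case v of VA \<Rightarrow> p1 | VB \<Rightarrow> p2 | VC \<Rightarrow> p3 | VD \<Rightarrow> p4 | VE \<Rightarrow> p5}"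

lemma setof_eq: "S = setof (VA\<in>S) (VB\<in>S) (VC\<in>S) (VD\<in>S) (VE\<in>S)"
  unfolding setof_def by (auto split: var.splits)

lemma pt_eq: "pt a b c d e = pt a' b' c' d' e' \<longleftrightarrow> a=a' \<and> b=b' \<and> c=c' \<and> d=d' \<and> e=e'"
  unfolding pt_def by (auto simp: fun_eq_iff split: var.splits)

lemma proj_pt: "proj S (pt a b c d e) = pt (if VA\<in>S then a else 0) (if VB\<in>S then b else 0)
   (if VC\<in>S then c else 0) (if VD\<in>S then d else 0) (if VE\<in>S then e else 0)"
  unfolding proj_def pt_def by (auto simp: fun_eq_iff split: var.splits)

lemma marg_alt: "finite Om \<Longrightarrow> marg p Om S y = (\<Sum>x\<in>Om. if proj S x = y then p x else 0)"
  unfolding marg_def by (simp add: sum.inter_filter)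

lemma peps_pt: "peps \<epsilon> (pt a b c d e) = (if (a,b,c,d,e) \<in> {(0,0,0,0,0),(0,1,1,0,0),(1,0,0,1,0),(1,1,0,0,0)} then \<epsilon>
   else if (a,b,c,d,e) \<in> {(0,0,0,0,1),(0,1,0,0,1),(1,0,0,0,1),(1,1,0,0,1)} then 1/4-\<epsilon> else 0)"
  unfolding peps_def by (simp add: pt_eq)

lemmas E = entvec_def marg_alt Om0_def proj_pt pt_eq peps_pt setof_def sum.insert_if phi_def

abbreviation "H e \<equiv> entvec (peps e) Om0"

lemma h1: "H e (setof True False True False True) = - (2*phi e + phi (2*e) + 2*phi (1/2-2*e))"
  by (simp add: E)
lemma h2: "H e (setof True False False True True) = - (2*phi e + phi (2*e) + 2*phi (1/2-2*e))"
  by (simp add: E)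
lemma h3: "H e (setof False True True False True) = - (2*phi e + phi (2*e) + 2*phi (1/2-2*e))"
  by (simp add: E)
lemma h4: "H e (setof False True False True True) = - (2*phi e + phi (2*e) + 2*phi (1/2-2*e))"
  by (simp add: E)
lemma h5: "H e (setof True False True True True) = - (4*phi e + 2*phi (1/2-2*e))"
  by (simp add: E)
lemma h6: "H e (setof False True True True True) = - (4*phi e + 2*phi (1/2-2*e))"
  by (simp add: E)
lemma h7: "H e (setof True True False False True) = - (4*phi e + 4*phi (1/4-e))"
  by (simp add: E)
lemma h8: "H e (setof False False True False True) = - (phi (3*e) + phi e + phi (1-4*e))"
  by (simp add: E)
lemma h9: "H e (setof False False False True True) = - (phi (3*e) + phi e + phi (1-4*e))"
  by (simp add: E)
lemma h10: "H e (setof False False True True True) = - (phi (2*e) + 2*phi e + phi (1-4*e))"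
  by (simp add: E)
lemma h11: "H e (setof True False True True False) = - (2*phi (1/2-e) + 2*phi e)"
  by (simp add: E)
lemma h12: "H e (setof False True True True False) = - (2*phi (1/2-e) + 2*phi e)"
  by (simp add: E)
lemma h13: "H e (setof True True True True False) = - (2*phi (1/4) + 2*phi e + 2*phi (1/4-e))"
  by (simp add: E)
lemma h14: "H e (setof False False True True False) = - (phi (1-2*e) + 2*phi e)"
  by (simp add: E)

lemma hk: "h S = h (setof (VA\<in>S) (VB\<in>S) (VC\<in>S) (VD\<in>S) (VE\<in>S))"
  by (rule arg_cong[OF setof_eq])

lemma Qperp_dec: "Qperp h = h (setof True False True False True) + h (setof True False False True True)
   - 2 * h (setof True False True True True) + h (setof False True True False True)
   + h (setof False True False True True) - 2 * h (setof False True True True True)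
   - h (setof True True False False True) - h (setof False False True False True)
   - h (setof False False False True True) + 3 * h (setof False False True True True)
   + 2 * h (setof True False True True False) + 2 * h (setof False True True True False)
   - h (setof True True True True False) - 3 * h (setof False False True True False)"
proof -
  define hh where "hh p1 p2 p3 p4 p5 = h (setof p1 p2 p3 p4 p5)" for p1 p2 p3 p4 p5
  have k: "h S = hh (VA\<in>S) (VB\<in>S) (VC\<in>S) (VD\<in>S) (VE\<in>S)" for S
    unfolding hh_def by (rule hk)
  show ?thesis
    by (simp only: Qperp_def CMI_def k) (simp add: setof_def)
qed

lemma dual_part: "h {} = 0 \<Longrightarrow> formal_dual Q h = Qperp h"
proof -
  assume h0: "h {} = 0"
  define hh where "hh p1 p2 p3 p4 p5 = h (setof p1 p2 p3 p4 p5)" for p1 p2 p3 p4 p5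
  have k: "h S = hh (VA\<in>S) (VB\<in>S) (VC\<in>S) (VD\<in>S) (VE\<in>S)" for S
    unfolding hh_def by (rule hk)
  have z: "hh False False False False False = 0" using h0 k[of "{}"] by simp
  have U: "(UNIV::var set) = {VA,VB,VC,VD,VE}" using var.exhaust by auto
  show ?thesis
    unfolding formal_dual_def Q_def Qperp_def MI_def CMI_def dualvec_def U
    by (simp only: k) (simp add: z)
qed

lemma phi_mult: "x > 0 \<Longrightarrow> y > 0 \<Longrightarrow> phi (x*y) = x*y*ln x + x * phi y"
  unfolding phi_def by (simp add: ln_mult algebra_simps)

lemma Qval:
  assumes a: "0 < a" "a < 1/4"
  shows "Qperp (H a) = 2*phi (1/4) + 2*phi (1/4-a) + 2*(1-2*a)*ln 2 - phi (1-2*a)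
            - a*(10*ln 2 - 6*ln 3)"
proof -
  have f2: "phi (2*a) = 2*a*ln 2 + 2*phi a" using phi_mult[of 2 a] a by simp
  have f3: "phi (3*a) = 3*a*ln 3 + 3*phi a" using phi_mult[of 3 a] a by simp
  have l4: "ln (4::real) = 2 * ln 2"
    using ln_mult[of 2 2] by simp
  have f4: "phi (1-4*a) = 4*(1/4-a)*(2*ln 2) + 4*phi (1/4-a)"
    using phi_mult[of 4 "1/4-a"] a l4 by (simp add: algebra_simps)
  have fh: "phi (1/2-a) = (1/2)*phi (1-2*a) - (1/2-a)*ln 2"
  proof -
    have "phi ((1/2)*(1-2*a)) = (1/2)*(1-2*a)*ln (1/2) + (1/2)*phi (1-2*a)"
      using phi_mult[of "1/2" "1-2*a"] a by simp
    moreover have "ln (1/2::real) = - ln 2" by (simp add: ln_div)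
    ultimately show ?thesis by (simp add: algebra_simps)
  qed
  show ?thesis
    unfolding Qperp_dec h1 h2 h3 h4 h5 h6 h7 h8 h9 h10 h11 h12 h13 h14 f2 f3 f4 fh
    by (simp add: algebra_simps)
qed

lemma Ibound:
  assumes a: "0 < a" "a < 1/4"
  shows "2*phi (1/4) + 2*phi (1/4-a) + 2*(1-2*a)*ln 2 - phi (1-2*a) \<le> 4*a^2/(1-2*a)"
proof -
  define s where "s = 1 - 2*a"
  have s: "s > 0" using a s_def by simp
  have l4: "ln (4::real) = 2 * ln 2"
    using ln_mult[of 2 2] by simp
  have key: "phi p + 2*p*ln 2 - p * ln s \<le> p*(4*p/s - 1)" if p: "p > 0" for p
  proof -
    have "ln (4*p/s) \<le> 4*p/s - 1" using ln_le_minus_one[of "4*p/s"] p s by simp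
    hence "p * ln (4*p/s) \<le> p*(4*p/s - 1)" using p by (simp add: mult_left_mono)
    moreover have "ln (4*p/s) = 2 * ln 2 + ln p - ln s"
      using p s l4 by (simp add: ln_div ln_mult)
    hence "p * ln (4*p/s) = p * (2 * ln 2 + ln p - ln s)" by simp
    hence "p * ln (4*p/s) = 2*p*ln 2 + p * ln p - p * ln s" by (simp only: algebra_simps)
    ultimately show ?thesis unfolding phi_def by linarith
  qed
  have k1: "phi (1/4) + 2*(1/4)*ln 2 - (1/4) * ln s \<le> (1/4)*(4*(1/4)/s - 1)"
    using key[of "1/4"] by simp
  have k2: "phi (1/4-a) + 2*(1/4-a)*ln 2 - (1/4-a) * ln s \<le> (1/4-a)*(4*(1/4-a)/s - 1)"
    using key[of "1/4-a"] a by simp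
  have e: "2*((1/4)*(4*(1/4)/s - 1)) + 2*((1/4-a)*(4*(1/4-a)/s - 1)) = 4*a^2/s"
  proof -
    have "2*((1/4)*(4*(1/4)/s - 1)) + 2*((1/4-a)*(4*(1/4-a)/s - 1))
        = (2*(1/4)*(1-s) + 2*(1/4-a)*(4*(1/4-a) - s))/s"
      using s by (simp add: field_simps)
    also have "2*(1/4)*(1-s) + 2*(1/4-a)*(4*(1/4-a) - s) = 4*a^2"
      unfolding s_def by (simp add: power2_eq_square algebra_simps)
    finally show ?thesis .
  qed
  have "phi s = s * ln s" unfolding phi_def ..
  hence "2*phi (1/4) + 2*phi (1/4-a) + 2*s*ln 2 - phi s
     = 2*(phi (1/4) + 2*(1/4)*ln 2 - (1/4) * ln s) + 2*(phi (1/4-a) + 2*(1/4-a)*ln 2 - (1/4-a) * ln s)"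
    unfolding s_def by (simp add: algebra_simps)
  also have "\<dots> \<le> 4*a^2/s"
  proof -
    have gen: "\<And>x y X Y (z::real). x \<le> X \<Longrightarrow> y \<le> Y \<Longrightarrow> 2*X+2*Y = z \<Longrightarrow> 2*x+2*y \<le> z"
      by linarith
    show ?thesis by (rule gen[OF k1 k2 e])
  qed
  finally show ?thesis unfolding s_def .
qed

theorem mainTheorem6:
  shows "(\<forall>h::vec. h {} = 0 \<longrightarrow> formal_dual Q h = Qperp h)
       \<and> (\<exists>\<epsilon>0>0. \<forall>\<epsilon>::real. 0 < \<epsilon> \<and> \<epsilon> < 1/4 \<and> \<epsilon> < \<epsilon>0 \<longrightarrow> Qperp (entvec (peps \<epsilon>) Om0) < 0)"
proof (intro conjI allI impI)
  fix h :: vec assume "h {} = 0" thus "formal_dual Q h = Qperp h" by (rule dual_part)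
next
  define c where "c = 10*ln 2 - 6*ln (3::real)"
  have "ln (27::real) < ln 32" by simp
  moreover have "ln (27::real) = 3 * ln 3" using ln_realpow[of 3 3] by simp
  moreover have "ln (32::real) = 5 * ln 2" using ln_realpow[of 2 5] by simp
  ultimately have c: "c > 0" unfolding c_def by simp
  show "\<exists>\<epsilon>0>0. \<forall>\<epsilon>::real. 0 < \<epsilon> \<and> \<epsilon> < 1/4 \<and> \<epsilon> < \<epsilon>0 \<longrightarrow> Qperp (entvec (peps \<epsilon>) Om0) < 0"
  proof (intro exI[of _ "c/8"] conjI allI impI)
    show "c/8 > 0" using c by simp
    fix a :: real assume h: "0 < a \<and> a < 1/4 \<and> a < c/8"
    hence a: "0 < a" "a < 1/4" "a < c/8" by auto
    have s: "1 - 2*a \<ge> 1/2" using a by simp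
    have "4*a^2/(1-2*a) \<le> 4*a^2/(1/2)"
      using s a by (intro divide_left_mono) auto
    also have "\<dots> = 8*a*a" by (simp add: power2_eq_square)
    also have "\<dots> < a * c" using a by simp
    finally have b: "4*a^2/(1-2*a) < a*c" .
    show "Qperp (entvec (peps a) Om0) < 0"
      using Qval[OF a(1,2)] Ibound[OF a(1,2)] b unfolding c_def by linarith
  qed
qed

end
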